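(* Let $n\ge1$, $v>0$ a scalar and $\mathbf{b}$ a nonzero vector, held fixed, and for each $d\ge1$ let $h^*=\left(\frac{vd}{4n\|\mathbf{b}\|_2^2}\right)^{1/(d+4)}$ and $\operatorname{LOMSE}(h,n,d)=h^4\|\mathbf{b}\|_2^2+\frac{v}{nh^d}$. Then in high-dimensional action spaces the squared leading-order bias $(h^* )^4\|\mathbf{b}\|_2^2$ dominates the leading-order variance $\frac{v}{n(h^* )^d}$, in the sense that their ratio tends to $\infty$ as $d\to\infty$; furthermore $\operatorname{LOMSE}(h^*,n,d)\to\|\mathbf{b}\|_2^2$ as $d\to\infty$, i.e. $\operatorname{LOMSE}(h^*,n,d)$ approximates $\|\mathbf{b}\|_2^2$.
   Context: In the paper, $d$ is the action dimension, $h^*$ the optimal kernel bandwidth minimizing the leading-order MSE $\operatorname{LOMSE}$ of a kernel-relaxed importance-resampling estimate of a TD update vector, $\mathbf{b}$ the bias constant vector, $v$ the variance constant and $n$ the data size; the statement treats $\mathbf{b},v,n$ as fixed while $d$ grows. *)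

theory Defs
  imports "HOL-Analysis.Analysis"
begin

definition hstar :: "real \<Rightarrow> 'a::real_normed_vector \<Rightarrow> nat \<Rightarrow> nat \<Rightarrow> real" where
  "hstar v b n d = (v * real d / (4 * real n * (norm b)^2)) powr (1 / (real d + 4))"

definition LOMSE :: "real \<Rightarrow> 'a::real_normed_vector \<Rightarrow> real \<Rightarrow> nat \<Rightarrow> nat \<Rightarrow> real" where
  "LOMSE v b h n d = h^4 * (norm b)^2 + v / (real n * h^d)"

end

theory Submission
  imports Defs "HOL-Real_Asymp.Real_Asymp"
begin

lemma h4lim:
  fixes c :: real assumes "c > 0"
  shows "((\<lambda>d::nat. (c * real d) powr (4 / (real d + 4))) \<longlongrightarrow> 1) sequentially"
  using assms by real_asymp

theorem proposition2:
  fixes v :: real and b :: "'a::real_normed_vector" and n :: nat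
  assumes "n \<ge> 1" and "v > 0" and "b \<noteq> 0"
  shows "filterlim (\<lambda>d. ((hstar v b n d)^4 * (norm b)^2) / (v / (real n * (hstar v b n d)^d)))
           at_top sequentially \<and>
         ((\<lambda>d. LOMSE v b (hstar v b n d) n d) \<longlongrightarrow> (norm b)^2) sequentially"
proof -
  define B where "B = (norm b)^2"
  define c where "c = v / (4 * real n * B)"
  have B: "B > 0" using assms(3) by (simp add: B_def)
  have n: "real n > 0" using assms(1) by simp
  have c: "c > 0" using B n assms(2) by (simp add: c_def)
  have hs: "hstar v b n d = (c * real d) powr (1 / (real d + 4))" for d
    by (simp add: hstar_def c_def B_def mult.assoc)
  have key: "(hstar v b n d)^4 = (c * real d) powr (4 / (real d + 4))"
    "(hstar v b n d)^d = (c * real d) powr (real d / (real d + 4))"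
    "(hstar v b n d) > 0" if "d \<ge> 1" for d
  proof -
    have p: "c * real d > 0" using c that by simp
    show "(hstar v b n d)^4 = (c * real d) powr (4 / (real d + 4))"
      unfolding hs using p that by (subst powr_power) auto
    show "(hstar v b n d)^d = (c * real d) powr (real d / (real d + 4))"
      unfolding hs using p that by (subst powr_power) auto
    show "(hstar v b n d) > 0" unfolding hs using p c that by simp
  qed
  have prod: "(hstar v b n d)^4 * (hstar v b n d)^d = c * real d" if "d \<ge> 1" for d
  proof -
    have p: "c * real d > 0" using c that by simp
    have "(c * real d) powr (4 / (real d + 4)) * (c * real d) powr (real d / (real d + 4))
          = (c * real d) powr (4 / (real d + 4) + real d / (real d + 4))"
      by (simp add: powr_add)
    also have "4 / (real d + 4) + real d / (real d + 4) = 1"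
      by (metis add.commute add_divide_distrib[symmetric] divide_self_if add_nonneg_pos of_nat_0_le_iff zero_less_numeral less_irrefl)
    finally show ?thesis using key[OF that] p by simp
  qed
  have r: "((hstar v b n d)^4 * (norm b)^2) / (v / (real n * (hstar v b n d)^d)) = real d / 4"
    if "d \<ge> 1" for d
  proof -
    have "((hstar v b n d)^4 * (norm b)^2) / (v / (real n * (hstar v b n d)^d))
        = ((hstar v b n d)^4 * (hstar v b n d)^d) * B * real n / v"
      using assms(2) by (simp add: B_def field_simps)
    also have "\<dots> = c * real d * B * real n / v" using prod[OF that] by simp
    also have "\<dots> = real d / 4" using B n assms(2) by (simp add: c_def field_simps)
    finally show ?thesis .
  qed
  have l: "LOMSE v b (hstar v b n d) n d = (c * real d) powr (4 / (real d + 4)) * B * (1 + 4 / real d)"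
    if "d \<ge> 1" for d
  proof -
    have hp: "(hstar v b n d)^d > 0" using key(3)[OF that] by simp
    have h4: "(hstar v b n d)^4 > 0" using key(3)[OF that] by simp
    have "v / (real n * (hstar v b n d)^d) = v * (hstar v b n d)^4 / (real n * ((hstar v b n d)^4 * (hstar v b n d)^d))"
      using h4 by simp
    also have "\<dots> = v * (hstar v b n d)^4 / (real n * c * real d)"
      using prod[OF that] by (simp add: mult.assoc)
    finally have "v / (real n * (hstar v b n d)^d) = v * (hstar v b n d)^4 / (real n * c * real d)" .
    also have "\<dots> = (hstar v b n d)^4 * B * (4 / real d)"
      using B n assms(2) that by (simp add: c_def field_simps)
    finally have "v / (real n * (hstar v b n d)^d) = (hstar v b n d)^4 * B * (4 / real d)" .
    thus ?thesis unfolding LOMSE_def using key(1)[OF that]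
      by (simp add: B_def algebra_simps)
  qed
  have A: "filterlim (\<lambda>d. ((hstar v b n d)^4 * (norm b)^2) / (v / (real n * (hstar v b n d)^d)))
           at_top sequentially"
  proof (rule filterlim_cong[THEN iffD2, OF refl refl])
    show "\<forall>\<^sub>F d in sequentially. ((hstar v b n d)^4 * (norm b)^2) / (v / (real n * (hstar v b n d)^d)) = real d / 4"
      by (rule eventually_mono[OF eventually_ge_at_top[of 1]]) (rule r)
    show "filterlim (\<lambda>d::nat. real d / 4) at_top sequentially" by real_asymp
  qed
  have L0: "((\<lambda>d::nat. (c * real d) powr (4 / (real d + 4)) * B * (1 + 4 / real d)) \<longlongrightarrow> 1 * B * (1 + 0)) sequentially"
    by (intro tendsto_intros h4lim c)
  have Lc: "\<forall>\<^sub>F d in sequentially. (c * real d) powr (4 / (real d + 4)) * B * (1 + 4 / real d) = LOMSE v b (hstar v b n d) n d"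
    by (rule eventually_mono[OF eventually_ge_at_top[of 1]]) (rule l[symmetric])
  have "((\<lambda>d. LOMSE v b (hstar v b n d) n d) \<longlongrightarrow> B) sequentially"
    using tendsto_cong[OF Lc] L0 by simp
  thus ?thesis using A by (simp add: B_def)
qed

end
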